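(* Let $\boldsymbol{\Xi} \in \mathbb{R}^{6\times 3}$ be a matrix whose columns are written as $\boldsymbol{\xi}_j = \begin{pmatrix}\boldsymbol{\alpha}_j \\ \boldsymbol{\beta}_j\end{pmatrix}$, $j=1,2,3$, with $\boldsymbol{\alpha}_j,\boldsymbol{\beta}_j\in\mathbb{R}^3$, so that $\boldsymbol{\Xi} = \begin{bmatrix}\boldsymbol{\alpha}_1 & \boldsymbol{\alpha}_2 & \boldsymbol{\alpha}_3\\ \boldsymbol{\beta}_1 & \boldsymbol{\beta}_2 & \boldsymbol{\beta}_3\end{bmatrix}$. Suppose $$\Vert\boldsymbol{\alpha}_1\Vert \neq 0 \quad\text{and}\quad \boldsymbol{\alpha}_1\times\boldsymbol{\alpha}_2 \neq \boldsymbol{0}.$$ Then there exist a unique screw-transformation matrix $$\boldsymbol{S} = \begin{bmatrix}\boldsymbol{R} & \boldsymbol{0}\\ [\boldsymbol{p}]_\times \boldsymbol{R} & \boldsymbol{R}\end{bmatrix},\qquad \boldsymbol{R}\in SO(3),\ \boldsymbol{p}\in\mathbb{R}^3,$$ and a unique matrix $\boldsymbol{U}\in\mathbb{R}^{6\times 3}$ of the form $$\boldsymbol{U} = \begin{bmatrix}\boldsymbol{U}_1\\ \boldsymbol{U}_2\end{bmatrix} = \begin{bmatrix} u_{11} & u_{12} & u_{13}\\ 0 & u_{22} & u_{23}\\ 0 & 0 & u_{33}\\ u_{41} & u_{42} & u_{43}\\ 0 & u_{52} & u_{53}\\ 0 & 0 & u_{63}\end{bmatrix}$$ (i.e. $\boldsymbol{U}_1,\boldsymbol{U}_2$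 are $3\times 3$ upper-triangular) with $u_{11}>0$ and $u_{22}>0$, such that $\boldsymbol{\Xi} = \boldsymbol{S}\,\boldsymbol{U}$.
   Context: For $\boldsymbol{a}\in\mathbb{R}^3$, $[\boldsymbol{a}]_\times$ denotes the $3\times 3$ skew-symmetric matrix with $[\boldsymbol{a}]_\times \boldsymbol{b} = \boldsymbol{a}\times\boldsymbol{b}$ for all $\boldsymbol{b}\in\mathbb{R}^3$. A screw-transformation matrix is a $6\times 6$ matrix of the form $\begin{bmatrix}\boldsymbol{R} & \boldsymbol{0}\\ [\boldsymbol{p}]_\times\boldsymbol{R} & \boldsymbol{R}\end{bmatrix}$ with $\boldsymbol{R}$ a $3\times3$ rotation matrix (orthogonal, determinant $+1$) and $\boldsymbol{p}\in\mathbb{R}^3$. A factorization $\boldsymbol{\Xi}=\boldsymbol{S}\boldsymbol{U}$ as in the claim is called an $SU$-decomposition. *)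

theory Defs
  imports "HOL-Analysis.Analysis" "HOL-Analysis.Cross3"
begin

definition skew :: "real^3 \<Rightarrow> real^3^3" where
  "skew a = matrix (\<lambda>b. cross3 a b)"

text \<open>Block representation: a 6x3 matrix is a pair (top 3x3 block, bottom 3x3 block);
  a 6x6 matrix is a quadruple of 3x3 blocks ((M11, M12), (M21, M22)).\<close>
type_synonym mat63 = "(real^3^3) \<times> (real^3^3)"
type_synonym mat66 = "mat63 \<times> mat63"

definition blockmult :: "mat66 \<Rightarrow> mat63 \<Rightarrow> mat63" where
  "blockmult M U =
     (fst (fst M) ** fst U + snd (fst M) ** snd U,
      fst (snd M) ** fst U + snd (snd M) ** snd U)"

definition screw :: "real^3^3 \<Rightarrow> real^3 \<Rightarrow> mat66" where
  "screw R p = ((R, 0), (skew p ** R, R))"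

definition is_screw :: "mat66 \<Rightarrow> bool" where
  "is_screw S \<longleftrightarrow> (\<exists>R p. rotation_matrix R \<and> S = screw R p)"

definition upper_triangular3 :: "real^3^3 \<Rightarrow> bool" where
  "upper_triangular3 M \<longleftrightarrow> M $ 2 $ 1 = 0 \<and> M $ 3 $ 1 = 0 \<and> M $ 3 $ 2 = 0"

end

theory Submission
  imports Defs
begin

lemma skew_mv: "skew p *v x = cross3 p x"
  by (simp add: skew_def matrix_def matrix_vector_mult_def sum_3 axis_def cross3_simps)

lemma col_mm: "column j (M ** N) = M *v column j (N::real^3^3)"
  by (simp add: column_def matrix_matrix_mult_def matrix_vector_mult_def vec_eq_iff)

lemma mv3: "(M::real^3^3) *v x = x$1 *\<^sub>R column 1 M + x$2 *\<^sub>R column 2 M + x$3 *\<^sub>R column 3 M"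
  by (simp add: column_def matrix_vector_mult_def vec_eq_iff sum_3 algebra_simps)

lemma tmv: "(transpose (M::real^3^3) *v x) $ i = column i M \<bullet> x"
  by (simp add: column_def matrix_vector_mult_def transpose_def inner_vec_def mult.commute)

lemma tmm: "(transpose (M::real^3^3) ** N) $ i $ j = column i M \<bullet> column j N"
  by (simp add: column_def matrix_matrix_mult_def transpose_def inner_vec_def)

lemma col_skew: "column j (skew p ** (A::real^3^3)) = cross3 p (column j A)"
  by (simp only: col_mm skew_mv)

lemma triple: "c \<bullet> cross3 p d = p \<bullet> cross3 d c"
  by (simp add: cross3_simps)

lemma rot_cols:
  assumes "rotation_matrix R"
  shows "cross3 (column 1 R) (column 2 R) = column 3 R"
    "cross3 (column 2 R) (column 3 R) = column 1 R"
    "cross3 (column 3 R) (column 1 R) = column 2 R"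
    "cross3 (column 1 R) (column 3 R) = - column 2 R"
    "cross3 (column 2 R) (column 1 R) = - column 3 R"
    "cross3 (column 3 R) (column 2 R) = - column 1 R"
proof -
  have h: "\<And>x y. cross3 (R *v x) (R *v y) = R *v cross3 x y"
    by (rule cross_rotation_matrix[OF assms])
  show 1: "cross3 (column 1 R) (column 2 R) = column 3 R"
    using h[of "axis 1 1" "axis 2 1"] by (simp add: matrix_vector_mult_basis cross_basis)
  show 2: "cross3 (column 2 R) (column 3 R) = column 1 R"
    using h[of "axis 2 1" "axis 3 1"] by (simp add: matrix_vector_mult_basis cross_basis)
  show 3: "cross3 (column 3 R) (column 1 R) = column 2 R"
    using h[of "axis 3 1" "axis 1 1"] by (simp add: matrix_vector_mult_basis cross_basis)
  show "cross3 (column 1 R) (column 3 R) = - column 2 R"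
    using 3 cross_skew[of "column 1 R" "column 3 R"] by simp
  show "cross3 (column 2 R) (column 1 R) = - column 3 R"
    using 1 cross_skew[of "column 2 R" "column 1 R"] by simp
  show "cross3 (column 3 R) (column 2 R) = - column 1 R"
    using 2 cross_skew[of "column 3 R" "column 2 R"] by simp
qed

lemma rot_orth:
  fixes R :: "real^3^3"
  assumes "rotation_matrix R"
  shows "column i R \<bullet> column i R = 1" "i \<noteq> j \<Longrightarrow> column i R \<bullet> column j R = 0"
proof -
  have "orthogonal_matrix R" using assms by (simp add: rotation_matrix_def)
  then have a: "\<forall>i. norm(column i R) = 1" "\<forall>i j. i \<noteq> j \<longrightarrow> orthogonal (column i R) (column j R)"
    using orthogonal_matrix_orthonormal_columns[of R] by auto
  show "column i R \<bullet> column i R = 1" using a(1) norm_eq_1 by blast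
  show "i \<noteq> j \<Longrightarrow> column i R \<bullet> column j R = 0" using a(2) orthogonal_def by blast
qed


lemma col_diff: "column j (X - Y) = column j X - column j (Y::real^3^3)"
  by (simp add: column_def vec_eq_iff)

lemma col_eq: "(\<And>j. column j M = column j N) \<Longrightarrow> M = (N::real^3^3)"
  by (simp add: column_def vec_eq_iff)

lemma cols_ut:
  assumes "upper_triangular3 U"
  shows "column 1 (R ** U) = U$1$1 *\<^sub>R column 1 R"
    "column 2 (R ** U) = U$1$2 *\<^sub>R column 1 R + U$2$2 *\<^sub>R column 2 (R::real^3^3)"
  unfolding col_mm mv3 using assms by (simp_all add: column_def upper_triangular3_def)

lemma zero_mm: "(0::real^3^3) ** M = 0"
  by (simp add: matrix_matrix_mult_def vec_eq_iff)

lemma rot_tr: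
  assumes "rotation_matrix (R::real^3^3)"
  shows "transpose R ** R = mat 1" "R ** transpose R = mat 1"
  using assms by (simp_all add: rotation_matrix_def orthogonal_matrix_def)

lemma u2_cond:
  fixes R U1 A B :: "real^3^3"
  assumes rot: "rotation_matrix R" and ut: "upper_triangular3 U1" and A: "A = R ** U1"
  shows "(transpose R ** (B - skew p ** A))$2$1 = column 2 R \<bullet> column 1 B - U1$1$1 * (p \<bullet> column 3 R)"
    "(transpose R ** (B - skew p ** A))$3$1 = column 3 R \<bullet> column 1 B + U1$1$1 * (p \<bullet> column 2 R)"
    "(transpose R ** (B - skew p ** A))$3$2 = column 3 R \<bullet> column 2 B - (U1$2$2 * (p \<bullet> column 1 R) - U1$1$2 * (p \<bullet> column 2 R))"
proof -
  note c = cols_ut[OF ut, of R, folded A]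
  have t1: "column 2 R \<bullet> cross3 p (column 1 R) = p \<bullet> column 3 R"
    using triple[of "column 2 R" p "column 1 R"] rot_cols[OF rot] by simp
  have t2: "column 3 R \<bullet> cross3 p (column 1 R) = - (p \<bullet> column 2 R)"
    using triple[of "column 3 R" p "column 1 R"] rot_cols[OF rot] by simp
  have t3: "column 3 R \<bullet> cross3 p (column 2 R) = p \<bullet> column 1 R"
    using triple[of "column 3 R" p "column 2 R"] rot_cols[OF rot] by simp
  show "(transpose R ** (B - skew p ** A))$2$1 = column 2 R \<bullet> column 1 B - U1$1$1 * (p \<bullet> column 3 R)"
    unfolding tmm col_diff col_skew c using t1 by (simp add: cross_mult_right inner_diff_right)
  show "(transpose R ** (B - skew p ** A))$3$1 = column 3 R \<bullet> column 1 B + U1$1$1 * (p \<bullet> column 2 R)"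
    unfolding tmm col_diff col_skew c using t2 by (simp add: cross_mult_right inner_diff_right)
  show "(transpose R ** (B - skew p ** A))$3$2 = column 3 R \<bullet> column 2 B - (U1$2$2 * (p \<bullet> column 1 R) - U1$1$2 * (p \<bullet> column 2 R))"
    unfolding tmm col_diff col_skew c using t2 t3
    by (simp add: cross_mult_right cross_add_right inner_diff_right inner_add_right algebra_simps)
qed

definition rr1 :: "real^3^3 \<Rightarrow> real^3" where
  "rr1 A = (1 / norm (column 1 A)) *\<^sub>R column 1 A"
definition ww :: "real^3^3 \<Rightarrow> real^3" where
  "ww A = column 2 A - (column 2 A \<bullet> rr1 A) *\<^sub>R rr1 A"
definition rr2 :: "real^3^3 \<Rightarrow> real^3" where
  "rr2 A = (1 / norm (ww A)) *\<^sub>R ww A"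
definition R0 :: "real^3^3 \<Rightarrow> real^3^3" where
  "R0 A = transpose (vector [rr1 A, rr2 A, cross3 (rr1 A) (rr2 A)])"

lemma R0_cols: "column 1 (R0 A) = rr1 A" "column 2 (R0 A) = rr2 A"
  "column 3 (R0 A) = cross3 (rr1 A) (rr2 A)"
  by (simp_all add: R0_def column_transpose row_def vector_3 vec_lambda_eta)

lemma qr_unique:
  fixes R U A :: "real^3^3"
  assumes rot: "rotation_matrix R" and ut: "upper_triangular3 U"
    and pos: "U$1$1 > 0" "U$2$2 > 0" and A: "A = R ** U"
  shows "R = R0 A"
proof -
  note c = cols_ut[OF ut, of R, folded A]
  note o = rot_orth[OF rot]
  have n1: "norm (column i R) = 1" for i using o(1)[of i] norm_eq_1 by blast
  have "norm (column 1 A) = U$1$1" using c(1) n1 pos by simp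
  then have e1: "rr1 A = column 1 R" using c(1) pos by (simp add: rr1_def)
  have "column 2 A \<bullet> rr1 A = U$1$2" unfolding e1 c(2)
    using o(1)[of 1] o(2)[of 2 1] by (simp add: inner_add_left)
  then have "ww A = U$2$2 *\<^sub>R column 2 R" unfolding ww_def c(2) e1 by simp
  then have e2: "rr2 A = column 2 R" using pos n1 by (simp add: rr2_def)
  have e3: "cross3 (rr1 A) (rr2 A) = column 3 R" using e1 e2 rot_cols[OF rot] by simp
  show ?thesis
  proof (rule col_eq)
    fix j :: 3
    show "column j R = column j (R0 A)"
      using exhaust_3[of j] by (elim disjE) (simp_all add: R0_cols e1 e2 rot_cols[OF rot])
  qed
qed


lemma ww_nz:
  assumes a1: "column 1 A \<noteq> 0" and cr: "cross3 (column 1 A) (column 2 A) \<noteq> 0"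
  shows "ww A \<noteq> 0"
proof
  assume "ww A = 0"
  then have "column 2 A = (column 2 A \<bullet> rr1 A) *\<^sub>R rr1 A" by (simp add: ww_def)
  then have "cross3 (column 1 A) (column 2 A) = (column 2 A \<bullet> rr1 A) *\<^sub>R cross3 (column 1 A) (rr1 A)"
    by (metis cross_mult_right)
  also have "cross3 (column 1 A) (rr1 A) = 0" by (simp add: rr1_def cross_mult_right)
  finally show False using cr by simp
qed

lemma basics:
  assumes a1: "column 1 A \<noteq> 0" and w: "ww A \<noteq> 0"
  shows "rr1 A \<bullet> rr1 A = 1" "rr2 A \<bullet> rr2 A = 1" "rr1 A \<bullet> rr2 A = 0" "rr2 A \<bullet> rr1 A = 0"
    "norm (rr1 A) = 1" "norm (rr2 A) = 1"
proof -
  show n1: "norm (rr1 A) = 1" using a1 by (simp add: rr1_def)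
  show n2: "norm (rr2 A) = 1" using w by (simp add: rr2_def)
  show i1: "rr1 A \<bullet> rr1 A = 1" using n1 norm_eq_1 by blast
  show "rr2 A \<bullet> rr2 A = 1" using n2 norm_eq_1 by blast
  have "ww A \<bullet> rr1 A = 0" unfolding ww_def using i1 by (simp add: inner_diff_left)
  then show "rr2 A \<bullet> rr1 A = 0" by (simp add: rr2_def)
  then show "rr1 A \<bullet> rr2 A = 0" by (simp add: inner_commute)
qed

lemma R0_rot:
  assumes a1: "column 1 A \<noteq> 0" and w: "ww A \<noteq> 0"
  shows "rotation_matrix (R0 A)"
proof -
  note b = basics[OF a1 w]
  have sq: "norm (cross3 (rr1 A) (rr2 A)) ^ 2 = 1"
    using norm_cross_dot[of "rr1 A" "rr2 A"] b by simp
  have nc: "norm (cross3 (rr1 A) (rr2 A)) = 1"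
    using sq norm_ge_zero[of "cross3 (rr1 A) (rr2 A)"] by (smt (verit) power2_eq_1_iff)
  have ort: "orthogonal_matrix (R0 A)"
    unfolding orthogonal_matrix_orthonormal_columns
    using b nc by (simp add: forall_3 R0_cols orthogonal_def dot_cross_self inner_commute)
  have "det (R0 A) = rr1 A \<bullet> cross3 (rr2 A) (cross3 (rr1 A) (rr2 A))"
    by (simp add: R0_def det_transpose dot_cross_det)
  also have "\<dots> = cross3 (rr1 A) (rr2 A) \<bullet> cross3 (rr1 A) (rr2 A)"
    using triple[of "rr1 A" "rr2 A" "cross3 (rr1 A) (rr2 A)"]
      triple[of "rr2 A" "cross3 (rr1 A) (rr2 A)" "rr1 A"] by simp
  also have "\<dots> = 1" using nc norm_eq_1 by blast
  finally show ?thesis using ort by (simp add: rotation_matrix_def)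
qed

theorem theorem1:
  fixes A B :: "real^3^3"
  assumes "norm (column 1 A) \<noteq> 0"
    and "cross3 (column 1 A) (column 2 A) \<noteq> 0"
  shows "\<exists>!(S, U). is_screw S \<and>
           upper_triangular3 (fst U) \<and> upper_triangular3 (snd U) \<and>
           fst U $ 1 $ 1 > 0 \<and> fst U $ 2 $ 2 > 0 \<and>
           (A, B) = blockmult S U"
proof -
  have a1: "column 1 A \<noteq> 0" using assms(1) by simp
  have wnz: "ww A \<noteq> 0" using ww_nz[OF a1 assms(2)] .
  note b = basics[OF a1 wnz]
  define R where "R = R0 A"
  have rot: "rotation_matrix R" using R0_rot[OF a1 wnz] by (simp add: R_def)
  note tr = rot_tr[OF rot]
  define U1 where "U1 = transpose R ** A"
  have AU: "A = R ** U1" by (simp add: U1_def matrix_mul_assoc tr)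
  have U1e: "U1$i$j = column i R \<bullet> column j A" for i j by (simp add: U1_def tmm)
  define n1 where "n1 = norm (column 1 A)"
  define k where "k = column 2 A \<bullet> rr1 A"
  define nw where "nw = norm (ww A)"
  have n1p: "n1 > 0" using a1 by (simp add: n1_def)
  have nwp: "nw > 0" using wnz by (simp add: nw_def)
  have a1e: "column 1 A = n1 *\<^sub>R rr1 A" using a1 by (simp add: rr1_def n1_def)
  have a2e: "column 2 A = k *\<^sub>R rr1 A + nw *\<^sub>R rr2 A"
    using wnz by (simp add: ww_def rr2_def k_def nw_def)
  have c3: "column 3 R \<bullet> rr1 A = 0" "column 3 R \<bullet> rr2 A = 0"
    by (simp_all add: R_def R0_cols dot_cross_self)
  have u11: "U1$1$1 = n1" unfolding U1e a1e by (simp add: R_def R0_cols b)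
  have u22: "U1$2$2 = nw" unfolding U1e a2e by (simp add: R_def R0_cols b inner_add_right)
  have u12: "U1$1$2 = k" unfolding U1e a2e by (simp add: R_def R0_cols b inner_add_right)
  have ut1: "upper_triangular3 U1" unfolding upper_triangular3_def U1e a1e a2e
    using c3 by (simp add: R_def R0_cols b inner_add_right)
  define q where "q = (vector [(column 3 R \<bullet> column 2 B + k * (-(column 3 R \<bullet> column 1 B)/n1))/nw,
       -(column 3 R \<bullet> column 1 B)/n1, (column 2 R \<bullet> column 1 B)/n1] :: real^3)"
  define p0 where "p0 = R *v q"
  have "transpose R *v p0 = q" by (simp only: p0_def matrix_vector_mul_assoc tr matrix_vector_mul_lid)
  then have pq: "p0 \<bullet> column i R = q$i" for i using tmv[of R p0 i] by (simp add: inner_commute)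
  define U2 where "U2 = transpose R ** (B - skew p0 ** A)"
  have ut2: "upper_triangular3 U2"
    unfolding upper_triangular3_def U2_def u2_cond[OF rot ut1 AU] u11 u12 u22 pq
    using n1p nwp by (simp add: q_def vector_3 field_simps)
  have sk: "skew p0 ** R ** U1 = skew p0 ** A" by (simp add: AU matrix_mul_assoc)
  have blk: "(A, B) = blockmult (screw R p0) (U1, U2)"
    by (simp add: sk blockmult_def screw_def zero_mm AU[symmetric] U2_def matrix_mul_assoc tr)
  have ex: "is_screw (screw R p0)" using rot by (auto simp: is_screw_def)
  show ?thesis
  proof (rule ex1I[where a="(screw R p0, (U1, U2))"])
    show "case (screw R p0, (U1, U2)) of (S, U) \<Rightarrow> is_screw S \<and>
           upper_triangular3 (fst U) \<and> upper_triangular3 (snd U) \<and>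
           fst U $ 1 $ 1 > 0 \<and> fst U $ 2 $ 2 > 0 \<and>
           (A, B) = blockmult S U"
      using ex ut1 ut2 u11 u22 n1p nwp blk by simp
  next
    fix x
    assume H: "case x of (S, U) \<Rightarrow> is_screw S \<and>
           upper_triangular3 (fst U) \<and> upper_triangular3 (snd U) \<and>
           fst U $ 1 $ 1 > 0 \<and> fst U $ 2 $ 2 > 0 \<and>
           (A, B) = blockmult S U"
    obtain S V1 V2 where x: "x = (S, (V1, V2))" by (metis prod.exhaust)
    from H have H': "is_screw S" "upper_triangular3 V1" "upper_triangular3 V2"
      "V1$1$1 > 0" "V1$2$2 > 0" "(A, B) = blockmult S (V1, V2)" by (simp_all add: x)
    obtain Rr p where rr: "rotation_matrix Rr" and S: "S = screw Rr p"
      using H'(1) by (auto simp: is_screw_def)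
    have AV: "A = Rr ** V1" and BV: "B = skew p ** Rr ** V1 + Rr ** V2"
      using H'(6) by (simp_all add: S blockmult_def screw_def zero_mm)
    have RR: "Rr = R" using qr_unique[OF rr H'(2) H'(4) H'(5) AV] by (simp add: R_def)
    have V1: "V1 = U1" by (simp add: U1_def AV RR matrix_mul_assoc tr)
    have "B - skew p ** A = R ** V2" using BV AV RR by (simp add: matrix_mul_assoc)
    then have V2: "V2 = transpose R ** (B - skew p ** A)" by (simp add: matrix_mul_assoc tr)
    have e: "(transpose R ** (B - skew p ** A))$2$1 = 0" "(transpose R ** (B - skew p ** A))$3$1 = 0"
      "(transpose R ** (B - skew p ** A))$3$2 = 0"
      using H'(3) unfolding V2 upper_triangular3_def by simp_all
    note e' = e[unfolded u2_cond[OF rot ut1 AU] u11 u12 u22]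
    have pq': "column i R \<bullet> p = q$i" for i
    proof -
      have y: "p \<bullet> column 2 R = -(column 3 R \<bullet> column 1 B)/n1"
        using e' n1p by (simp add: field_simps)
      have z: "p \<bullet> column 1 R = (column 3 R \<bullet> column 2 B + k * (p \<bullet> column 2 R))/nw"
        using e' nwp by (simp add: field_simps)
      have "p \<bullet> column 3 R = q$3" "p \<bullet> column 2 R = q$2" "p \<bullet> column 1 R = q$1"
        using e' n1p nwp y z by (simp_all only: q_def vector_3) (simp_all add: field_simps)
      then show ?thesis using exhaust_3[of i] inner_commute[of "column i R" p]
        by (elim disjE) simp_all
    qed
    have "transpose R *v p = q" unfolding vec_eq_iff tmv pq' by simp
    have "p = (R ** transpose R) *v p" by (simp only: tr(2) matrix_vector_mul_lid)
    also have "\<dots> = R *v (transpose R *v p)" by (simp only: matrix_vector_mul_assoc)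
    also have "\<dots> = p0" unfolding p0_def \<open>transpose R *v p = q\<close> ..
    finally have "p = p0" .
    then show "x = (screw R p0, (U1, U2))"
      using x S RR V1 V2 U2_def by simp
  qed
qed

end
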